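(* Let $\Gamma$ be a gain operator on $\ell^\infty_+(\mathcal I)$ and assume: (i) there is a subset $A\subset\Psi(\Gamma)$ which is weakly$^*$ closed, forward-invariant ($\Gamma(A)\subset A$), cofinal and coercive; (ii) $\Sigma(\Gamma)$ is GATT; (iii) Assumption A holds and $\mathcal N^+_i(1)\setminus\{i\}\ne\emptyset$ for all $i\in\mathcal I$. Then there exists $s^0\in\mathrm{int}(\ell^\infty_+(\mathcal I))\cap\Psi(\Gamma)$ admitting a complete orbit $\{s^n:n\in\mathbb Z\}$ (i.e. $s^{n+1}=\Gamma(s^n)$ for all $n\in\mathbb Z$) such that the path obtained by linear interpolation between the points $s^n$ is a $C^0$-path of decay for $\Gamma$.
   Context: Let $\mathcal I$ be a nonempty countable index set; $\ell^\infty_+(\mathcal I)$ is the cone of nonnegative real families $s=(s_i)_{i\in\mathcal I}$ with $\|s\|:=\sup_i|s_i|<\infty$, ordered componentwise; its interior is $\mathrm{int}(\ell^\infty_+(\mathcal I))=\{s:\inf_i s_i>0\}$; $\mathbf 1$ is the all-ones vector. The weak$^*$-topology is that of $\ell^\infty(\mathcal I)=(\ell^1(\mathcal I))^*$. $\mathcal K_\infty$: continuous strictly increasing unbounded $\gamma:\mathbb R_+\to\mathbb R_+$ with $\gamma(0)=0$. For $\mathcal J\subset\mathcal I$, $s_{|\mathcal J}$ agrees with $s$ on $\mathcal J$ and is $0$ elsewhere. Gain operator: for each $i$ a finite (possibly empty) $\mathcal I_i\subset\mathcal I\setminus\{i\}$; directed graph $\mathcal G$ with vertices $\mathcal I$ and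 edges $ji$, $j\in\mathcal I_i$; a pointwise equicontinuous family $\gamma_{ij}\in\mathcal K_\infty$ ($ji\in E(\mathcal G)$); functions $\mu_i:\ell^\infty_+(\mathcal I)\to[0,\infty]$ with (M1) some $\xi\in\mathcal K_\infty$ has $\mu_i(0)=0$, $\mu_i(s)\ge\xi(\|s\|)$; (M2) $\mu_i$ monotone; (M3) for each finite $\mathcal J$, $\mu_i$ restricted to vectors vanishing off $\mathcal J$ is finite-valued and continuous; (M4) for each norm-bounded $A$ and $\varepsilon>0$ there is $\delta>0$ with $\sup_i|\mu_i(s_{|\mathcal I_i})-\mu_i(s^0_{|\mathcal I_i})|\le\varepsilon$ whenever $s^0\in A$, $\|s-s^0\|\le\delta$. $\Gamma_i(s):=\mu_i([\gamma_{ij}(s_j)]_{j\in\mathcal I_i})$ (argument zero outside $\mathcal I_i$). Assumption A: there is $\eta\in\mathcal K_\infty$ with $\gamma_{ij}\ge\eta$ for all $ji\in E(\mathcal G)$, and $\mathcal I_i\ne\emptyset$ for all $i$. $\mathcal N^+_i(1)$ is the set of vertices $j$ reachable from $i$ by a directed path of length at most $1$ (i.e. $\{i\}\cup\{j: i\in\mathcal I_j\}$). $\Psi(\Gamma):=\{s:\Gamma(s)\le s\}$; $\Sigma(\Gamma)$ is the system $s^{n+1}=\Gamma(s^n)$, GATT if $\|\Gamma^n(s)\|\to0$ for all $s$. $A$ is cofinal if every $s$ has $\hat s\in A$ with $s\le\hat s$; coercive if $s\ge\underline\varphi(\|s\|)\mathbf 1$ for all $s\in A$ and some $\underline\varphi\in\mathcal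 K_\infty$. A $C^0$-path of decay for $\Gamma$ is a path $\sigma:\mathbb R_+\to\ell^\infty_+(\mathcal I)$ with $\sigma(r)\in\Psi(\Gamma)$ for all $r$, $\varphi_{\min}(r)\mathbf 1\le\sigma(r)\le\varphi_{\max}(r)\mathbf 1$ for some $\varphi_{\min},\varphi_{\max}\in\mathcal K_\infty$, increasing and norm-continuous. *)

theory Defs
  imports "HOL-Analysis.Analysis"
begin

definition linf :: "('i \<Rightarrow> real) set" where
  "linf = {s. bdd_above (range (\<lambda>i. \<bar>s i\<bar>))}"

definition linf_plus :: "('i \<Rightarrow> real) set" where
  "linf_plus = {s. (\<forall>i. 0 \<le> s i) \<and> bdd_above (range s)}"

definition supnorm :: "('i \<Rightarrow> real) \<Rightarrow> real" where
  "supnorm s = (SUP i. \<bar>s i\<bar>)"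

definition restr :: "('i \<Rightarrow> real) \<Rightarrow> 'i set \<Rightarrow> ('i \<Rightarrow> real)" where
  "restr s J = (\<lambda>i. if i \<in> J then s i else 0)"

definition Kinf :: "(real \<Rightarrow> real) \<Rightarrow> bool" where
  "Kinf g \<longleftrightarrow> g 0 = 0 \<and> continuous_on {0..} g \<and> strict_mono_on {0..} g
     \<and> (\<forall>M. \<exists>r\<ge>0. M < g r)"

text \<open>Gain operator data: Iset i is the finite set of in-neighbours of i,
  gam i j is gamma_ij (for j in Iset i), mu i is mu_i.\<close>

definition gain_operator ::
  "('i \<Rightarrow> 'i set) \<Rightarrow> ('i \<Rightarrow> 'i \<Rightarrow> real \<Rightarrow> real) \<Rightarrow> ('i \<Rightarrow> ('i \<Rightarrow> real) \<Rightarrow> ennreal) \<Rightarrow> bool"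
where
  "gain_operator Iset gam mu \<longleftrightarrow>
     (\<forall>i. finite (Iset i) \<and> i \<notin> Iset i)
   \<and> (\<forall>i. \<forall>j\<in>Iset i. Kinf (gam i j))
   \<comment> \<open>pointwise equicontinuity of the family gamma_ij\<close>
   \<and> (\<forall>r\<ge>0. \<forall>\<epsilon>>0. \<exists>\<delta>>0. \<forall>i. \<forall>j\<in>Iset i. \<forall>r'\<ge>0.
        \<bar>r' - r\<bar> < \<delta> \<longrightarrow> \<bar>gam i j r' - gam i j r\<bar> < \<epsilon>)
   \<comment> \<open>(M1)\<close>
   \<and> (\<exists>\<xi>. Kinf \<xi> \<and> (\<forall>i. mu i (\<lambda>_. 0) = 0 \<and>
        (\<forall>s\<in>linf_plus. ennreal (\<xi> (supnorm s)) \<le> mu i s)))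
   \<comment> \<open>(M2)\<close>
   \<and> (\<forall>i. \<forall>s\<in>linf_plus. \<forall>t\<in>linf_plus. (\<forall>k. s k \<le> t k) \<longrightarrow> mu i s \<le> mu i t)
   \<comment> \<open>(M3)\<close>
   \<and> (\<forall>i. \<forall>J. finite J \<longrightarrow>
        (let V = {s\<in>linf_plus. \<forall>k. k \<notin> J \<longrightarrow> s k = 0} in
          (\<forall>s\<in>V. mu i s < \<infinity>) \<and>
          (\<forall>s\<in>V. \<forall>\<epsilon>>0. \<exists>\<delta>>0. \<forall>t\<in>V. supnorm (\<lambda>k. t k - s k) < \<delta> \<longrightarrow>
              \<bar>enn2real (mu i t) - enn2real (mu i s)\<bar> < \<epsilon>)))
   \<comment> \<open>(M4)\<close>
   \<and> (\<forall>A \<subseteq> linf_plus. (\<exists>R. \<forall>s\<in>A. supnorm s \<le> R) \<longrightarrow>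
        (\<forall>\<epsilon>>0. \<exists>\<delta>>0. \<forall>s0\<in>A. \<forall>s\<in>linf_plus. supnorm (\<lambda>k. s k - s0 k) \<le> \<delta> \<longrightarrow>
           (\<forall>i. \<bar>enn2real (mu i (restr s (Iset i))) - enn2real (mu i (restr s0 (Iset i)))\<bar> \<le> \<epsilon>)))"

text \<open>Gamma_i(s) = mu_i([gamma_ij(s_j)]_{j in I_i}); finite by (M3).\<close>
definition Gam ::
  "('i \<Rightarrow> 'i set) \<Rightarrow> ('i \<Rightarrow> 'i \<Rightarrow> real \<Rightarrow> real) \<Rightarrow> ('i \<Rightarrow> ('i \<Rightarrow> real) \<Rightarrow> ennreal)
     \<Rightarrow> ('i \<Rightarrow> real) \<Rightarrow> ('i \<Rightarrow> real)" where
  "Gam Iset gam mu s = (\<lambda>i. enn2real (mu i (\<lambda>j. if j \<in> Iset i then gam i j (s j) else 0)))"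

definition Psi :: "(('i \<Rightarrow> real) \<Rightarrow> ('i \<Rightarrow> real)) \<Rightarrow> ('i \<Rightarrow> real) set" where
  "Psi G = {s\<in>linf_plus. \<forall>i. G s i \<le> s i}"

definition GATT :: "(('i \<Rightarrow> real) \<Rightarrow> ('i \<Rightarrow> real)) \<Rightarrow> bool" where
  "GATT G \<longleftrightarrow> (\<forall>s\<in>linf_plus. (\<lambda>n. supnorm ((G ^^ n) s)) \<longlonglongrightarrow> 0)"

text \<open>weak-star closedness in ell-infinity = dual of ell-1: every point of ell-infinity
  outside A has a basic weak-star neighbourhood (finitely many ell-1 functionals) missing A.\<close>
definition weak_star_closed :: "('i \<Rightarrow> real) set \<Rightarrow> bool" where
  "weak_star_closed A \<longleftrightarrow> A \<subseteq> linf \<and>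
     (\<forall>s\<in>linf - A. \<exists>F. finite F \<and> (\<forall>a\<in>F. (\<lambda>i. norm (a i)) summable_on UNIV) \<and>
        (\<exists>\<epsilon>>0. \<forall>t\<in>A. \<exists>a\<in>F. \<epsilon> \<le> \<bar>infsum (\<lambda>i. a i * (t i - s i)) UNIV\<bar>))"

definition cofinal :: "('i \<Rightarrow> real) set \<Rightarrow> bool" where
  "cofinal A \<longleftrightarrow> (\<forall>s\<in>linf_plus. \<exists>t\<in>A. \<forall>i. s i \<le> t i)"

definition coercive :: "('i \<Rightarrow> real) set \<Rightarrow> bool" where
  "coercive A \<longleftrightarrow> (\<exists>\<phi>. Kinf \<phi> \<and> (\<forall>s\<in>A. \<forall>i. \<phi> (supnorm s) \<le> s i))"

definition interior_cone :: "('i \<Rightarrow> real) set" where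
  "interior_cone = {s\<in>linf_plus. \<exists>c>0. \<forall>i. c \<le> s i}"

definition assumption_A :: "('i \<Rightarrow> 'i set) \<Rightarrow> ('i \<Rightarrow> 'i \<Rightarrow> real \<Rightarrow> real) \<Rightarrow> bool" where
  "assumption_A Iset gam \<longleftrightarrow>
     (\<exists>\<eta>. Kinf \<eta> \<and> (\<forall>i. \<forall>j\<in>Iset i. \<forall>r\<ge>0. \<eta> r \<le> gam i j r)) \<and> (\<forall>i. Iset i \<noteq> {})"

definition path_of_decay :: "(('i \<Rightarrow> real) \<Rightarrow> ('i \<Rightarrow> real)) \<Rightarrow> (real \<Rightarrow> ('i \<Rightarrow> real)) \<Rightarrow> bool" where
  "path_of_decay G \<sigma> \<longleftrightarrow>
     (\<forall>r\<ge>0. \<sigma> r \<in> Psi G)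
   \<and> (\<exists>\<phi>min \<phi>max. Kinf \<phi>min \<and> Kinf \<phi>max \<and>
        (\<forall>r\<ge>0. \<forall>i. \<phi>min r \<le> \<sigma> r i \<and> \<sigma> r i \<le> \<phi>max r))
   \<and> (\<forall>r\<ge>0. \<forall>r'. r \<le> r' \<longrightarrow> (\<forall>i. \<sigma> r i \<le> \<sigma> r' i))
   \<and> (\<forall>r\<ge>0. \<forall>\<epsilon>>0. \<exists>\<delta>>0. \<forall>r'\<ge>0. \<bar>r' - r\<bar> < \<delta> \<longrightarrow> supnorm (\<lambda>i. \<sigma> r' i - \<sigma> r i) < \<epsilon>)"

text \<open>Linear interpolation of a bi-infinite sequence (s n), placing s n at the parameter
  2 powr (-n), and 0 at parameter 0.\<close>
definition interpolates :: "(int \<Rightarrow> ('i \<Rightarrow> real)) \<Rightarrow> (real \<Rightarrow> ('i \<Rightarrow> real)) \<Rightarrow> bool" where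
  "interpolates s \<sigma> \<longleftrightarrow> \<sigma> 0 = (\<lambda>_. 0) \<and>
     (\<forall>n::int. \<forall>\<theta>\<in>{0..1::real}.
        \<sigma> ((1 - \<theta>) * 2 powr (- real_of_int (n + 1)) + \<theta> * 2 powr (- real_of_int n))
          = (\<lambda>i. (1 - \<theta>) * s (n + 1) i + \<theta> * s n i))"

end

theory Submission
  imports Defs
begin


lemma supnorm_ge: "bdd_above (range (\<lambda>i. \<bar>s i\<bar>)) \<Longrightarrow> \<bar>s i\<bar> \<le> supnorm s"
  unfolding supnorm_def by (rule cSUP_upper) auto

lemma supnorm_le: "(\<And>i. \<bar>s i\<bar> \<le> M) \<Longrightarrow> supnorm s \<le> M"
  unfolding supnorm_def by (rule cSUP_least) auto

lemma linf_plus_bdd: "s \<in> linf_plus \<Longrightarrow> bdd_above (range (\<lambda>i. \<bar>s i\<bar>))"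
  unfolding linf_plus_def by auto

lemma linf_plus_ge: "s \<in> linf_plus \<Longrightarrow> s i \<le> supnorm s"
  using supnorm_ge[OF linf_plus_bdd, of s i] by (auto simp: linf_plus_def)

lemma linf_plus_nonneg: "s \<in> linf_plus \<Longrightarrow> 0 \<le> s i"
  by (auto simp: linf_plus_def)

lemma supnorm_nonneg_lp: "s \<in> linf_plus \<Longrightarrow> 0 \<le> supnorm s"
  using linf_plus_ge[of s undefined] linf_plus_nonneg[of s undefined] by linarith

lemma linf_plusI: "(\<And>i. 0 \<le> s i) \<Longrightarrow> (\<And>i. s i \<le> M) \<Longrightarrow> s \<in> linf_plus"
  unfolding linf_plus_def by (auto intro!: bdd_aboveI[of _ M])

lemma supnorm_mono_lp: "s \<in> linf_plus \<Longrightarrow> t \<in> linf_plus \<Longrightarrow> (\<And>i. s i \<le> t i) \<Longrightarrow> supnorm s \<le> supnorm t"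
  apply (rule supnorm_le)
  using linf_plus_nonneg linf_plus_ge by (metis abs_of_nonneg order_trans)

lemma Kinf_strict: "Kinf g \<Longrightarrow> 0 \<le> x \<Longrightarrow> x < y \<Longrightarrow> g x < g y"
  unfolding Kinf_def by (metis atLeast_iff order_le_less_trans order_less_imp_le strict_mono_onD)

lemma Kinf_mono: "Kinf g \<Longrightarrow> 0 \<le> x \<Longrightarrow> x \<le> y \<Longrightarrow> g x \<le> g y"
  using Kinf_strict[of g x y] by (cases "x = y") auto

lemma Kinf_pos: "Kinf g \<Longrightarrow> 0 < x \<Longrightarrow> 0 < g x"
  using Kinf_strict[of g 0 x] unfolding Kinf_def by auto

lemma Kinf_nonneg: "Kinf g \<Longrightarrow> 0 \<le> x \<Longrightarrow> 0 \<le> g x"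
  using Kinf_pos[of g x] unfolding Kinf_def by (cases "x = 0") auto

lemma Kinf_unb: "Kinf g \<Longrightarrow> \<exists>r\<ge>0. M < g r"
  unfolding Kinf_def by auto

lemma Kinf_cont: "Kinf g \<Longrightarrow> continuous_on {0..} g"
  unfolding Kinf_def by auto

lemma Kinf_comp: assumes f: "Kinf f" and g: "Kinf g" shows "Kinf (\<lambda>r. f (g r))"
  unfolding Kinf_def
proof (intro conjI allI)
  show "f (g 0) = 0" using f g by (simp add: Kinf_def)
  show "continuous_on {0..} (\<lambda>r. f (g r))"
    using continuous_on_compose2[OF Kinf_cont[OF f] Kinf_cont[OF g]]
      Kinf_nonneg[OF g] by auto
  show "strict_mono_on {0..} (\<lambda>r. f (g r))"
    by (rule strict_mono_onI) (use f g Kinf_strict Kinf_nonneg in auto)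
  fix M
  obtain a where a: "a \<ge> 0" "M < f a" using Kinf_unb[OF f] by blast
  obtain b where b: "b \<ge> 0" "a < g b" using Kinf_unb[OF g] by blast
  have "f a \<le> f (g b)" using Kinf_mono[OF f a(1)] b by auto
  thus "\<exists>r\<ge>0. M < f (g r)" using a b by (intro exI[of _ b]) auto
qed



definition argv :: "('i \<Rightarrow> 'i set) \<Rightarrow> ('i \<Rightarrow> 'i \<Rightarrow> real \<Rightarrow> real) \<Rightarrow> 'i \<Rightarrow> ('i \<Rightarrow> real) \<Rightarrow> ('i \<Rightarrow> real)"
  where "argv Iset gam i s = (\<lambda>j. if j \<in> Iset i then gam i j (s j) else 0)"

lemma Gam_eq: "Gam Iset gam mu s i = enn2real (mu i (argv Iset gam i s))"
  by (simp add: Gam_def argv_def)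

lemma gain_fin: "gain_operator Iset gam mu \<Longrightarrow> finite (Iset i)"
  unfolding gain_operator_def by (elim conjE) blast

lemma gain_K: "gain_operator Iset gam mu \<Longrightarrow> j \<in> Iset i \<Longrightarrow> Kinf (gam i j)"
  unfolding gain_operator_def by (elim conjE) blast

lemma gain_M2: "gain_operator Iset gam mu \<Longrightarrow> s \<in> linf_plus \<Longrightarrow> t \<in> linf_plus \<Longrightarrow> (\<And>k. s k \<le> t k) \<Longrightarrow> mu i s \<le> mu i t"
  unfolding gain_operator_def by (elim conjE) blast

lemma gain_M3_raw: "gain_operator Iset gam mu \<Longrightarrow> (\<forall>i. \<forall>J. finite J \<longrightarrow>
        (let V = {s\<in>linf_plus. \<forall>k. k \<notin> J \<longrightarrow> s k = 0} in
          (\<forall>s\<in>V. mu i s < \<infinity>) \<and>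
          (\<forall>s\<in>V. \<forall>\<epsilon>>0. \<exists>\<delta>>0. \<forall>t\<in>V. supnorm (\<lambda>k. t k - s k) < \<delta> \<longrightarrow>
              \<bar>enn2real (mu i t) - enn2real (mu i s)\<bar> < \<epsilon>)))"
  unfolding gain_operator_def by (elim conjE) assumption

lemma gain_M3:
  assumes "gain_operator Iset gam mu" "finite J"
  shows "\<forall>s\<in>{s\<in>linf_plus. \<forall>k. k \<notin> J \<longrightarrow> s k = 0}. mu i s < \<infinity>"
    and "\<forall>s\<in>{s\<in>linf_plus. \<forall>k. k \<notin> J \<longrightarrow> s k = 0}. \<forall>\<epsilon>>0. \<exists>\<delta>>0. \<forall>t\<in>{s\<in>linf_plus. \<forall>k. k \<notin> J \<longrightarrow> s k = 0}.
             supnorm (\<lambda>k. t k - s k) < \<delta> \<longrightarrow> \<bar>enn2real (mu i t) - enn2real (mu i s)\<bar> < \<epsilon>"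
proof -
  have "let V = {s\<in>linf_plus. \<forall>k. k \<notin> J \<longrightarrow> s k = 0} in
          (\<forall>s\<in>V. mu i s < \<infinity>) \<and>
          (\<forall>s\<in>V. \<forall>\<epsilon>>0. \<exists>\<delta>>0. \<forall>t\<in>V. supnorm (\<lambda>k. t k - s k) < \<delta> \<longrightarrow>
              \<bar>enn2real (mu i t) - enn2real (mu i s)\<bar> < \<epsilon>)"
    using gain_M3_raw[OF assms(1)] assms(2) by blast
  then show "\<forall>s\<in>{s\<in>linf_plus. \<forall>k. k \<notin> J \<longrightarrow> s k = 0}. mu i s < \<infinity>"
    and "\<forall>s\<in>{s\<in>linf_plus. \<forall>k. k \<notin> J \<longrightarrow> s k = 0}. \<forall>\<epsilon>>0. \<exists>\<delta>>0. \<forall>t\<in>{s\<in>linf_plus. \<forall>k. k \<notin> J \<longrightarrow> s k = 0}.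
             supnorm (\<lambda>k. t k - s k) < \<delta> \<longrightarrow> \<bar>enn2real (mu i t) - enn2real (mu i s)\<bar> < \<epsilon>"
    unfolding Let_def by blast+
qed

lemma gain_M1:
  assumes "gain_operator Iset gam mu"
  obtains \<xi> where "Kinf \<xi>" "\<And>i. mu i (\<lambda>_. 0) = 0" "\<And>i s. s \<in> linf_plus \<Longrightarrow> ennreal (\<xi> (supnorm s)) \<le> mu i s"
proof -
  have "\<exists>\<xi>. Kinf \<xi> \<and> (\<forall>i. mu i (\<lambda>_. 0) = 0 \<and>
        (\<forall>s\<in>linf_plus. ennreal (\<xi> (supnorm s)) \<le> mu i s))"
    using assms unfolding gain_operator_def by (elim conjE) assumption
  then show ?thesis using that by blast
qed

lemma argv_nonneg:
  assumes "gain_operator Iset gam mu" "\<And>j. 0 \<le> s j"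
  shows "0 \<le> argv Iset gam i s j"
  using Kinf_nonneg[OF gain_K[OF assms(1)]] assms(2) by (auto simp: argv_def)

lemma argv_lp:
  assumes g: "gain_operator Iset gam mu" and s: "\<And>j. 0 \<le> s j"
  shows "argv Iset gam i s \<in> linf_plus"
proof (rule linf_plusI)
  show "0 \<le> argv Iset gam i s j" for j by (rule argv_nonneg[where s=s, OF g s])
  show "argv Iset gam i s j \<le> (\<Sum>k\<in>Iset i. gam i k (s k))" for j
  proof (cases "j \<in> Iset i")
    case True
    then show ?thesis unfolding argv_def
      using member_le_sum[of j "Iset i" "\<lambda>k. gam i k (s k)"] gain_fin[OF g]
        Kinf_nonneg[OF gain_K[OF g]] s by auto
  next
    case False
    then show ?thesis unfolding argv_def
      using sum_nonneg[of "Iset i" "\<lambda>k. gam i k (s k)"] Kinf_nonneg[OF gain_K[OF g]] s by auto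
  qed
qed

lemma argv_V:
  assumes g: "gain_operator Iset gam mu" and s: "\<And>j. 0 \<le> s j"
  shows "argv Iset gam i s \<in> {s\<in>linf_plus. \<forall>k. k \<notin> Iset i \<longrightarrow> s k = 0}"
  using argv_lp[where s=s, OF g s] by (auto simp: argv_def)

lemma mu_fin:
  assumes g: "gain_operator Iset gam mu" and s: "\<And>j. 0 \<le> s j"
  shows "mu i (argv Iset gam i s) < \<infinity>"
  using gain_M3(1)[OF g gain_fin[OF g], of i] argv_V[where s=s, OF g s, of i] by blast

lemma Gam_nonneg: "0 \<le> Gam Iset gam mu s i"
  by (simp add: Gam_def)

lemma Gam_mono:
  assumes g: "gain_operator Iset gam mu" and s: "\<And>j. 0 \<le> s j" and st: "\<And>j. s j \<le> t j"
  shows "Gam Iset gam mu s i \<le> Gam Iset gam mu t i"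
proof -
  have t: "0 \<le> t j" for j using s[of j] st[of j] by linarith
  have "mu i (argv Iset gam i s) \<le> mu i (argv Iset gam i t)"
  proof (rule gain_M2[OF g argv_lp[where s=s, OF g s] argv_lp[where s=t, OF g t]])
    fix k show "argv Iset gam i s k \<le> argv Iset gam i t k"
      unfolding argv_def using Kinf_mono[OF gain_K[OF g], of k i "s k" "t k"] s st by auto
  qed
  thus ?thesis unfolding Gam_eq using mu_fin[where s=t, OF g t, of i] by (simp add: enn2real_mono)
qed

lemma Gam_zero:
  assumes g: "gain_operator Iset gam mu"
  shows "Gam Iset gam mu (\<lambda>_. 0) i = 0"
proof -
  obtain \<xi> where "\<And>i. mu i (\<lambda>_. 0) = 0" using gain_M1[OF g] by blast
  moreover have "argv Iset gam i (\<lambda>_. 0) = (\<lambda>_. 0)"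
    using gain_K[OF g] by (auto simp: argv_def Kinf_def)
  ultimately show ?thesis unfolding Gam_eq by simp
qed

lemma Gam_lower:
  assumes g: "gain_operator Iset gam mu" and s: "\<And>j. 0 \<le> s j" and j: "j \<in> Iset i"
    and xi: "Kinf \<xi>" "\<And>i s. s \<in> linf_plus \<Longrightarrow> ennreal (\<xi> (supnorm s)) \<le> mu i s"
  shows "\<xi> (gam i j (s j)) \<le> Gam Iset gam mu s i"
proof -
  let ?u = "argv Iset gam i s"
  have u: "?u \<in> linf_plus" by (rule argv_lp[where s=s, OF g s])
  have "gam i j (s j) \<le> supnorm ?u"
    using linf_plus_ge[OF u, of j] j by (simp add: argv_def)
  moreover have "0 \<le> gam i j (s j)" using Kinf_nonneg[OF gain_K[OF g j] s] .
  ultimately have "\<xi> (gam i j (s j)) \<le> \<xi> (supnorm ?u)" by (rule Kinf_mono[OF xi(1), rotated])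
  moreover have "\<xi> (supnorm ?u) \<le> enn2real (mu i ?u)"
  proof -
    have "ennreal (\<xi> (supnorm ?u)) \<le> mu i ?u" by (rule xi(2)[OF u])
    moreover have "0 \<le> \<xi> (supnorm ?u)" using Kinf_nonneg[OF xi(1) supnorm_nonneg_lp[OF u]] .
    moreover have fin: "mu i ?u < \<infinity>" by (rule mu_fin[where s=s, OF g s])
    ultimately have "enn2real (ennreal (\<xi> (supnorm ?u))) \<le> enn2real (mu i ?u)"
      by (intro enn2real_mono) simp_all
    then show ?thesis using \<open>0 \<le> \<xi> (supnorm ?u)\<close> by simp
  qed
  ultimately show ?thesis unfolding Gam_eq by linarith
qed



lemma supnorm_fin_supp:
  assumes "finite J" "\<And>k. k \<notin> J \<Longrightarrow> d k = 0"
  shows "supnorm d \<le> (\<Sum>k\<in>J. \<bar>d k\<bar>)"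
proof (rule supnorm_le)
  fix k show "\<bar>d k\<bar> \<le> (\<Sum>k\<in>J. \<bar>d k\<bar>)"
    using member_le_sum[of k J "\<lambda>k. \<bar>d k\<bar>"] assms sum_nonneg[of J "\<lambda>k. \<bar>d k\<bar>"]
    by (cases "k \<in> J") auto
qed

lemma Gam_cont:
  assumes g: "gain_operator Iset gam mu" and x: "\<And>k j. 0 \<le> x k j"
    and lim: "\<And>j. (\<lambda>k. x k j) \<longlonglongrightarrow> y j"
  shows "(\<lambda>k. Gam Iset gam mu (x k) i) \<longlonglongrightarrow> Gam Iset gam mu y i"
proof -
  have y: "0 \<le> y j" for j by (rule LIMSEQ_le_const[OF lim]) (use x in auto)
  let ?V = "{s\<in>linf_plus. \<forall>k. k \<notin> Iset i \<longrightarrow> s k = 0}"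
  have uV: "argv Iset gam i y \<in> ?V" by (rule argv_V[where s=y, OF g y])
  have ukV: "argv Iset gam i (x k) \<in> ?V" for k by (rule argv_V[where s="x k", OF g x])
  have cj: "(\<lambda>k. argv Iset gam i (x k) j) \<longlonglongrightarrow> argv Iset gam i y j" for j
  proof (cases "j \<in> Iset i")
    case True
    have "(\<lambda>k. gam i j (x k j)) \<longlonglongrightarrow> gam i j (y j)"
      by (rule continuous_on_tendsto_compose[OF Kinf_cont[OF gain_K[OF g True]] lim])
         (use y x in auto)
    then show ?thesis using True by (simp add: argv_def)
  qed (simp add: argv_def)
  have sn: "(\<lambda>k. \<Sum>j\<in>Iset i. \<bar>argv Iset gam i (x k) j - argv Iset gam i y j\<bar>) \<longlonglongrightarrow> 0"
  proof -
    have "(\<lambda>k. \<bar>argv Iset gam i (x k) j - argv Iset gam i y j\<bar>) \<longlonglongrightarrow> 0" for j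
      using tendsto_rabs_zero[OF LIM_zero[OF cj]] .
    then show ?thesis by (rule tendsto_null_sum)
  qed
  show ?thesis
    unfolding Gam_eq
  proof (rule LIMSEQ_I)
    fix e :: real assume e: "0 < e"
    obtain d where d: "d > 0" "\<And>t. t \<in> ?V \<Longrightarrow> supnorm (\<lambda>k. t k - argv Iset gam i y k) < d \<Longrightarrow>
        \<bar>enn2real (mu i t) - enn2real (mu i (argv Iset gam i y))\<bar> < e"
      using gain_M3(2)[OF g gain_fin[OF g], of i, rule_format, OF uV e] by blast
    obtain N where N: "\<And>k. k \<ge> N \<Longrightarrow> norm ((\<Sum>j\<in>Iset i. \<bar>argv Iset gam i (x k) j - argv Iset gam i y j\<bar>) - 0) < d"
      using LIMSEQ_D[OF sn d(1)] by blast
    show "\<exists>N. \<forall>k\<ge>N. norm (enn2real (mu i (argv Iset gam i (x k))) - enn2real (mu i (argv Iset gam i y))) < e"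
    proof (intro exI allI impI)
      fix k assume "N \<le> k"
      have "supnorm (\<lambda>j. argv Iset gam i (x k) j - argv Iset gam i y j) \<le> (\<Sum>j\<in>Iset i. \<bar>argv Iset gam i (x k) j - argv Iset gam i y j\<bar>)"
        by (rule supnorm_fin_supp[OF gain_fin[OF g]]) (simp add: argv_def)
      also have "\<dots> < d" using N[OF \<open>N \<le> k\<close>] by simp
      finally show "norm (enn2real (mu i (argv Iset gam i (x k))) - enn2real (mu i (argv Iset gam i y))) < e"
        using d(2)[OF ukV] by simp
    qed
  qed
qed



definition P :: "int \<Rightarrow> real" where "P n = 2 powr (- real_of_int n)"

lemma P_pos: "0 < P n" by (simp add: P_def)

lemma P_succ: "P (n + 1) = P n / 2"
  by (simp add: P_def powr_diff powr_minus divide_simps)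

lemma P_pred: "P (n - 1) = 2 * P n"
  using P_succ[of "n - 1"] by simp

lemma P_strict: "m < n \<Longrightarrow> P n < P m"
  by (simp add: P_def)

lemma P_mono: "m \<le> n \<Longrightarrow> P n \<le> P m"
  by (simp add: P_def)

lemma P_less_iff: "P n < P m \<longleftrightarrow> m < n"
  by (simp add: P_def)

lemma P_le_iff: "P n \<le> P m \<longleftrightarrow> m \<le> n"
  by (simp add: P_def)

definition idx :: "real \<Rightarrow> int" where "idx r = \<lfloor>- log 2 r\<rfloor>"

lemma idx_bounds:
  assumes "0 < r" shows "P (idx r + 1) < r" "r \<le> P (idx r)"
proof -
  let ?n = "idx r"
  have f1: "real_of_int ?n \<le> - log 2 r" and f2: "- log 2 r < real_of_int ?n + 1"
    unfolding idx_def by linarith+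
  have "log 2 r \<le> - real_of_int ?n" using f1 by linarith
  thus "r \<le> P ?n" unfolding P_def using log_le_iff[of 2 r] assms by simp
  have "- real_of_int (?n + 1) < log 2 r" using f2 by simp
  thus "P (?n + 1) < r" unfolding P_def using less_log_iff[of 2 r] assms by simp
qed

lemma idx_unique:
  assumes "P (n + 1) < r" "r \<le> P n" shows "idx r = n"
proof -
  have r: "0 < r" using assms(1) P_pos[of "n+1"] by linarith
  have "log 2 r \<le> - real_of_int n" using assms(2) unfolding P_def using log_le_iff[of 2 r] r by simp
  moreover have "- real_of_int (n + 1) < log 2 r" using assms(1) unfolding P_def using less_log_iff[of 2 r] r by simp
  ultimately show ?thesis unfolding idx_def by (intro floor_unique) auto
qed

definition L :: "(int \<Rightarrow> real) \<Rightarrow> real \<Rightarrow> real" where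
  "L a r = (if r \<le> 0 then 0 else a (idx r + 1) + (r / P (idx r + 1) - 1) * (a (idx r) - a (idx r + 1)))"

lemma L_zero: "L a 0 = 0" by (simp add: L_def)

lemma L_int:
  assumes "P (n + 1) < r" "r \<le> P n"
  shows "L a r = a (n + 1) + (r / P (n + 1) - 1) * (a n - a (n + 1))"
proof -
  have r: "0 < r" using assms(1) P_pos[of "n+1"] by linarith
  show ?thesis using idx_unique[OF assms] r by (simp add: L_def)
qed

lemma L_closed:
  assumes "P (n + 1) \<le> r" "r \<le> P n"
  shows "L a r = a (n + 1) + (r / P (n + 1) - 1) * (a n - a (n + 1))"
proof (cases "r = P (n + 1)")
  case True
  have "P (n + 1 + 1) < r" "r \<le> P (n + 1)" using True P_strict[of "n+1" "n+1+1"] by auto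
  from L_int[OF this, of a] have "L a r = a (n + 1 + 1) + (r / P (n + 1 + 1) - 1) * (a (n + 1) - a (n + 1 + 1))" .
  also have e: "P (n + 1 + 1) = P (n + 1) / 2" by (rule P_succ)
  have "r / P (n + 1 + 1) = 2" unfolding e True using P_pos[of "n+1"] by simp
  ultimately show ?thesis using True P_pos[of "n+1"] by simp
next
  case False
  then show ?thesis using L_int[of n r a] assms by simp
qed

lemma L_interp:
  assumes "0 \<le> \<theta>" "\<theta> \<le> 1"
  shows "L a ((1 - \<theta>) * P (n + 1) + \<theta> * P n) = (1 - \<theta>) * a (n + 1) + \<theta> * a n"
proof -
  have Pn: "P n = 2 * P (n + 1)" using P_succ[of n] by simp
  have pos: "0 < P (n + 1)" by (rule P_pos)
  let ?r = "(1 - \<theta>) * P (n + 1) + \<theta> * P n"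
  have r: "?r = (1 + \<theta>) * P (n + 1)" unfolding Pn by algebra
  have "P (n + 1) \<le> ?r" "?r \<le> P n" unfolding r using assms pos by (auto simp: Pn)
  from L_closed[OF this, of a] have "L a ?r = a (n + 1) + (?r / P (n + 1) - 1) * (a n - a (n + 1))" .
  also have "?r / P (n + 1) - 1 = \<theta>" unfolding r using pos by simp
  finally show ?thesis by algebra
qed

lemma anti_int:
  fixes a :: "int \<Rightarrow> real"
  assumes "\<forall>n. a (n + 1) \<le> (a n :: real)" "m \<le> n" shows "a n \<le> a m"
proof -
  have "a (m + int d) \<le> a m" for d
  proof (induction d)
    case (Suc d)
    have step: "a (m + int d + 1) \<le> a (m + int d)" using assms(1) by blast
    have eq: "m + int (Suc d) = m + int d + 1" by simp
    have "a (m + int d + 1) \<le> a m" using step Suc.IH by linarith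
    thus ?case unfolding eq .
  qed simp
  from this[of "nat (n - m)"] show ?thesis using assms(2) by simp
qed

lemma santi_int:
  fixes a :: "int \<Rightarrow> real"
  assumes "\<forall>n. a (n + 1) < (a n :: real)" "m < n" shows "a n < a m"
proof -
  have "a (m + int d + 1) < a m" for d
  proof (induction d)
    case 0 show ?case using assms(1) by simp
  next
    case (Suc d)
    have step: "a (m + int d + 1 + 1) < a (m + int d + 1)" using assms(1) by blast
    have eq: "m + int (Suc d) + 1 = m + int d + 1 + 1" by simp
    have "a (m + int d + 1 + 1) < a m" using step Suc.IH by linarith
    thus ?case unfolding eq .
  qed
  from this[of "nat (n - m - 1)"] show ?thesis using assms(2) by simp
qed

lemma L_bounds:
  assumes "\<forall>n. a (n + 1) \<le> a n" "P (n + 1) < r" "r \<le> P n"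
  shows "a (n + 1) \<le> L a r" "L a r \<le> a n"
proof -
  have pos: "0 < P (n + 1)" by (rule P_pos)
  have Pn: "P n = 2 * P (n + 1)" using P_succ[of n] by simp
  have t0: "0 \<le> r / P (n + 1) - 1" using assms(2) pos by (simp add: field_simps)
  have t1: "r / P (n + 1) - 1 \<le> 1" using assms(3) pos Pn by (simp add: field_simps)
  have d: "0 \<le> a n - a (n + 1)" using spec[OF assms(1), of n] by simp
  show "a (n + 1) \<le> L a r" unfolding L_int[OF assms(2,3)] using t0 d by simp
  have "(r / P (n + 1) - 1) * (a n - a (n + 1)) \<le> 1 * (a n - a (n + 1))"
    by (rule mult_right_mono[OF t1 d])
  then show "L a r \<le> a n" unfolding L_int[OF assms(2,3)] by simp
qed

lemma L_small:
  assumes "\<forall>n. a (n + 1) \<le> a n" "\<forall>n. 0 \<le> a n" "0 \<le> r" "r \<le> P n"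
  shows "L a r \<le> a n"
proof (cases "r = 0")
  case True then show ?thesis using assms(2) by (simp add: L_zero)
next
  case False
  then have r: "0 < r" using assms(3) by simp
  let ?m = "idx r"
  have "P (?m + 1) < P n" using idx_bounds(1)[OF r] assms(4) by linarith
  then have "n \<le> ?m" by (simp add: P_less_iff)
  then show ?thesis using L_bounds(2)[OF assms(1) idx_bounds[OF r]] anti_int[of a n ?m] assms(1) by force
qed

lemma L_nonneg:
  assumes "\<forall>n. a (n + 1) \<le> a n" "\<forall>n. 0 \<le> a n" "0 \<le> r"
  shows "0 \<le> L a r"
proof (cases "r = 0")
  case True then show ?thesis by (simp add: L_zero)
next
  case False
  then have r: "0 < r" using assms(3) by simp
  show ?thesis using L_bounds(1)[OF assms(1) idx_bounds[OF r]] spec[OF assms(2), of "idx r + 1"] by linarith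
qed

lemma L_mono:
  assumes a: "\<forall>n. a (n + 1) \<le> a n" "\<forall>n. 0 \<le> a n" and r: "0 \<le> r" "r \<le> r'"
  shows "L a r \<le> L a r'"
proof (cases "r = 0")
  case True then show ?thesis using L_nonneg[OF a, of r'] r by (simp add: L_zero)
next
  case False
  then have r0: "0 < r" using r by simp
  have r0': "0 < r'" using r r0 by linarith
  let ?n = "idx r" and ?m = "idx r'"
  note bn = idx_bounds[OF r0] and bm = idx_bounds[OF r0']
  have "?m \<le> ?n"
  proof (rule ccontr)
    assume "\<not> ?m \<le> ?n"
    then have "?n + 1 \<le> ?m" by simp
    then have "P ?m \<le> P (?n + 1)" by (rule P_mono)
    then show False using bn bm r by linarith
  qed
  show ?thesis
  proof (cases "?m = ?n")
    case True
    have pos: "0 < P (?n + 1)" by (rule P_pos)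
    have "r / P (?n + 1) - 1 \<le> r' / P (?n + 1) - 1" using r pos by (simp add: divide_right_mono)
    moreover have "0 \<le> a ?n - a (?n + 1)" using spec[OF a(1), of ?n] by simp
    ultimately show ?thesis unfolding L_int[OF bn, of a] L_int[OF bm, of a] True
      by (simp add: mult_right_mono)
  next
    case False
    then have "?m + 1 \<le> ?n" using \<open>?m \<le> ?n\<close> by simp
    then have "a ?n \<le> a (?m + 1)" by (rule anti_int[OF a(1)])
    then show ?thesis using L_bounds(2)[OF a(1) bn] L_bounds(1)[OF a(1) bm] by linarith
  qed
qed

lemma L_strict:
  assumes a: "\<forall>n. a (n + 1) < a n" "\<forall>n. 0 < a n" and r: "0 \<le> r" "r < r'"
  shows "L a r < L a r'"
proof -
  have a1: "\<forall>n. a (n + 1) \<le> a n" using a(1) less_imp_le by blast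
  have r0': "0 < r'" using r by linarith
  let ?m = "idx r'"
  note bm = idx_bounds[OF r0']
  have pos: "0 < P (?m + 1)" by (rule P_pos)
  have th: "0 < r' / P (?m + 1) - 1" using bm pos by (simp add: field_simps)
  have gt: "a (?m + 1) < L a r'" unfolding L_int[OF bm, of a]
    using th spec[OF a(1), of ?m] by simp
  show ?thesis
  proof (cases "r = 0")
    case True then show ?thesis using gt spec[OF a(2), of "?m + 1"] by (simp add: L_zero)
  next
    case False
    then have r0: "0 < r" using r by simp
    let ?n = "idx r"
    note bn = idx_bounds[OF r0]
    have "?m \<le> ?n"
    proof (rule ccontr)
      assume "\<not> ?m \<le> ?n"
      then have "?n + 1 \<le> ?m" by simp
      then have "P ?m \<le> P (?n + 1)" by (rule P_mono)
      then show False using bn bm r by linarith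
    qed
    show ?thesis
    proof (cases "?m = ?n")
      case True
      have pos: "0 < P (?n + 1)" by (rule P_pos)
      have "r / P (?n + 1) - 1 < r' / P (?n + 1) - 1" using r pos by (simp add: divide_strict_right_mono)
      moreover have "0 < a ?n - a (?n + 1)" using spec[OF a(1), of ?n] by simp
      ultimately show ?thesis unfolding L_int[OF bn, of a] L_int[OF bm, of a] True
        by (simp add: mult_strict_right_mono)
    next
      case False
      then have "?m + 1 \<le> ?n" using \<open>?m \<le> ?n\<close> by simp
      then have "a ?n \<le> a (?m + 1)" by (rule anti_int[OF a1])
      then show ?thesis using L_bounds(2)[OF a1 bn] gt by linarith
    qed
  qed
qed



lemma L_lip_closed:
  assumes "P (k + 1) \<le> x" "x \<le> P k" "P (k + 1) \<le> y" "y \<le> P k"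
  shows "\<bar>L a x - L a y\<bar> = \<bar>x - y\<bar> / P (k + 1) * \<bar>a k - a (k + 1)\<bar>"
proof -
  have pos: "0 < P (k + 1)" by (rule P_pos)
  have "L a x - L a y = (x - y) / P (k + 1) * (a k - a (k + 1))"
    unfolding L_closed[OF assms(1,2)] L_closed[OF assms(3,4)] using pos by (simp add: field_simps)
  then show ?thesis using pos by (simp add: abs_mult)
qed

lemma L_lip:
  assumes r: "P (n + 1) < r" "r \<le> P n" and r': "P (n + 1) < r'" "r' \<le> P (n - 1)"
    and D: "\<And>k. k \<in> {n - 1, n, n + 1} \<Longrightarrow> 0 \<le> a k \<and> a k \<le> D"
  shows "\<bar>L a r' - L a r\<bar> \<le> D / P (n + 1) * \<bar>r' - r\<bar>"
proof -
  have pos: "0 < P (n + 1)" by (rule P_pos)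
  have Pn: "P n = 2 * P (n + 1)" using P_succ[of n] by simp
  have Pn1: "P (n - 1) = 2 * P n" by (rule P_pred)
  have d1: "\<bar>a n - a (n + 1)\<bar> \<le> D" using D[of n] D[of "n+1"] by auto
  have d2: "\<bar>a (n - 1) - a n\<bar> \<le> D" using D[of n] D[of "n-1"] by auto
  have D0: "0 \<le> D" using D[of n] by auto
  show ?thesis
  proof (cases "r' \<le> P n")
    case True
    have "\<bar>L a r' - L a r\<bar> = \<bar>r' - r\<bar> / P (n + 1) * \<bar>a n - a (n + 1)\<bar>"
      by (rule L_lip_closed) (use r r' True in auto)
    also have "\<dots> \<le> \<bar>r' - r\<bar> / P (n + 1) * D"
      by (rule mult_left_mono[OF d1]) (use pos in simp)
    finally show ?thesis by (simp add: field_simps)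
  next
    case False
    have e: "n - 1 + 1 = n" by simp
    have A: "\<bar>L a r' - L a (P n)\<bar> = \<bar>r' - P n\<bar> / P n * \<bar>a (n - 1) - a n\<bar>"
      using L_lip_closed[of "n - 1" r' "P n" a] False r' unfolding e by auto
    have B: "\<bar>L a (P n) - L a r\<bar> = \<bar>P n - r\<bar> / P (n + 1) * \<bar>a n - a (n + 1)\<bar>"
      by (rule L_lip_closed) (use r pos Pn in auto)
    have A': "\<bar>r' - P n\<bar> / P n * \<bar>a (n - 1) - a n\<bar> \<le> (r' - P n) / P (n + 1) * D"
    proof -
      have "\<bar>r' - P n\<bar> / P n \<le> (r' - P n) / P (n + 1)"
        using False pos Pn by (simp add: field_simps)
      moreover have "0 \<le> (r' - P n) / P (n + 1)" using False pos by simp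
      ultimately show ?thesis using d2 by (meson abs_ge_zero mult_mono)
    qed
    have B': "\<bar>P n - r\<bar> / P (n + 1) * \<bar>a n - a (n + 1)\<bar> \<le> (P n - r) / P (n + 1) * D"
    proof -
      have q: "0 \<le> (P n - r) / P (n + 1)" using r pos by simp
      have "\<bar>P n - r\<bar> = P n - r" using r by simp
      then show ?thesis using mult_left_mono[OF d1 q] by simp
    qed
    have "\<bar>L a r' - L a r\<bar> \<le> \<bar>L a r' - L a (P n)\<bar> + \<bar>L a (P n) - L a r\<bar>" by linarith
    also have "\<dots> \<le> (r' - P n) / P (n + 1) * D + (P n - r) / P (n + 1) * D"
      using A B A' B' by linarith
    also have "\<dots> = D / P (n + 1) * \<bar>r' - r\<bar>"
    proof -
      have "\<bar>r' - r\<bar> = r' - r" using False r by simp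
      moreover have "(r' - P n) / P (n + 1) * D + (P n - r) / P (n + 1) * D = (r' - r) * (D / P (n + 1))"
        using pos by (simp add: field_simps)
      ultimately show ?thesis by simp
    qed
    finally show ?thesis .
  qed
qed

lemma L_cont_family:
  fixes a :: "'j \<Rightarrow> int \<Rightarrow> real" and D :: "int \<Rightarrow> real"
  assumes nn: "\<forall>j n. 0 \<le> a j n" and le: "\<forall>j n. a j n \<le> D n"
    and anti: "\<forall>j n. a j (n + 1) \<le> a j n" and small: "\<forall>e>0. \<exists>n. D n < e"
    and r: "0 \<le> r" and e: "0 < e"
  shows "\<exists>d>0. \<forall>r'\<ge>0. \<bar>r' - r\<bar> < d \<longrightarrow> (\<forall>j. \<bar>L (a j) r' - L (a j) r\<bar> \<le> e)"
proof (cases "r = 0")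
  case True
  obtain n where n: "D n < e" using small e by blast
  show ?thesis
  proof (intro exI[of _ "P n"] conjI allI impI)
    show "0 < P n" by (rule P_pos)
    fix r' j assume r': "0 \<le> r'" "\<bar>r' - r\<bar> < P n"
    have an: "\<forall>n. a j (n + 1) \<le> a j n" "\<forall>n. 0 \<le> a j n" using anti nn by auto
    have "L (a j) r' \<le> a j n" by (rule L_small[OF an]) (use r' True in auto)
    moreover have "0 \<le> L (a j) r'" by (rule L_nonneg[OF an r'(1)])
    ultimately show "\<bar>L (a j) r' - L (a j) r\<bar> \<le> e"
      using True L_zero[of "a j"] le n by (smt (verit))
  qed
next
  case False
  then have r0: "0 < r" using r by simp
  define n where "n = idx r"
  have bn: "P (n + 1) < r" "r \<le> P n" using idx_bounds[OF r0] unfolding n_def by auto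
  define D' where "D' = D (n - 1)"
  have Dk: "0 \<le> a j k \<and> a j k \<le> D'" if "k \<in> {n - 1, n, n + 1}" for j k
  proof -
    have "a j k \<le> a j (n - 1)" using that anti_int[of "a j" "n - 1" k] anti by auto
    then show ?thesis using nn le unfolding D'_def by (meson order_trans)
  qed
  have D'0: "0 \<le> D'" using Dk[of n undefined] by auto
  define K where "K = D' / P (n + 1) + 1"
  have "0 \<le> D' / P (n + 1)" using D'0 P_pos[of "n+1"] by simp
  then have K: "0 < K" unfolding K_def by simp
  have Pn1: "P (n - 1) = 2 * P n" by (rule P_pred)
  have gap: "0 < P (n - 1) - r" using bn Pn1 P_pos[of n] by simp
  define d where "d = min (min (r - P (n + 1)) (P (n - 1) - r)) (e / K)"
  show ?thesis
  proof (intro exI[of _ d] conjI allI impI)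
    show "0 < d" unfolding d_def using bn gap e K by simp
    fix r' j assume r': "0 \<le> r'" "\<bar>r' - r\<bar> < d"
    have r'b: "P (n + 1) < r'" "r' \<le> P (n - 1)" using r'(2) unfolding d_def by auto
    have "\<bar>L (a j) r' - L (a j) r\<bar> \<le> D' / P (n + 1) * \<bar>r' - r\<bar>"
      by (rule L_lip[OF bn r'b]) (use Dk in blast)
    also have "\<dots> \<le> K * \<bar>r' - r\<bar>" unfolding K_def by (simp add: distrib_right)
    also have "\<dots> \<le> K * (e / K)" using r'(2) K unfolding d_def by (intro mult_left_mono) auto
    also have "\<dots> = e" using K by simp
    finally show "\<bar>L (a j) r' - L (a j) r\<bar> \<le> e" .
  qed
qed

lemma Kinf_L:
  fixes b :: "int \<Rightarrow> real"
  assumes sa: "\<forall>n. b (n + 1) < b n" and pos: "\<forall>n. 0 < b n"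
    and small: "\<forall>e>0. \<exists>n. b n < e" and big: "\<forall>M. \<exists>n. M < b n"
  shows "Kinf (L b)"
  unfolding Kinf_def
proof (intro conjI allI)
  have b0: "\<forall>n. 0 \<le> b n" using pos less_imp_le by blast
  have b1: "\<forall>n. b (n + 1) \<le> b n" using sa less_imp_le by blast
  show "L b 0 = 0" by (rule L_zero)
  show "strict_mono_on {0..} (L b)"
    by (rule strict_mono_onI) (use L_strict[OF sa pos] in auto)
  show "continuous_on {0..} (L b)"
    unfolding continuous_on_iff
  proof (intro ballI allI impI)
    fix x e :: real assume x: "x \<in> {0..}" and e: "0 < e"
    have "\<exists>d>0. \<forall>r'\<ge>0. \<bar>r' - x\<bar> < d \<longrightarrow> (\<forall>j::unit. \<bar>L ((\<lambda>_. b) j) r' - L ((\<lambda>_. b) j) x\<bar> \<le> e / 2)"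
      by (rule L_cont_family[of "\<lambda>_. b" b]) (use b0 b1 small x e in auto)
    then obtain d where d: "d > 0" "\<And>r'. r' \<ge> 0 \<Longrightarrow> \<bar>r' - x\<bar> < d \<Longrightarrow> \<bar>L b r' - L b x\<bar> \<le> e / 2" by auto
    show "\<exists>d>0. \<forall>x'\<in>{0..}. dist x' x < d \<longrightarrow> dist (L b x') (L b x) < e"
    proof (intro exI[of _ d] conjI ballI impI)
      fix x' :: real assume "x' \<in> {0..}" "dist x' x < d"
      then have "\<bar>L b x' - L b x\<bar> \<le> e / 2" using d(2)[of x'] by (simp add: dist_real_def)
      then show "dist (L b x') (L b x) < e" using e by (simp add: dist_real_def)
    qed (use d in auto)
  qed
  fix M
  obtain n where n: "M < b n" using big by blast
  have "L b (P n) = b n"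
    using L_closed[of "n - 1" "P n" b] P_pred[of n] P_pos[of n] by simp
  then show "\<exists>r\<ge>0. M < L b r" using n P_pos[of n] by (intro exI[of _ "P n"]) auto
qed



lemma seq_box:
  fixes f :: "nat \<Rightarrow> ('a::countable \<Rightarrow> real)"
  assumes "\<And>k x. 0 \<le> f k x \<and> f k x \<le> B x"
  shows "\<exists>l r. strict_mono r \<and> (\<forall>x. (\<lambda>k. f (r k) x) \<longlonglongrightarrow> l x)"
proof -
  define S where "S = PiE UNIV (\<lambda>x. {0..B x})"
  have "compactin (product_topology (\<lambda>x. euclidean) UNIV) S"
    unfolding S_def by (subst compactin_PiE) auto
  hence "compact S" by (simp add: euclidean_product_topology)
  hence "seq_compact S" by (rule compact_imp_seq_compact)
  moreover have "\<And>k. f k \<in> S" using assms unfolding S_def by auto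
  ultimately obtain l r where "l \<in> S" "strict_mono r" "(f \<circ> r) \<longlonglongrightarrow> l"
    unfolding seq_compact_def by metis
  moreover have "(\<lambda>k. f (r k) x) \<longlonglongrightarrow> l x" for x
  proof -
    have "isCont (\<lambda>g. g x) l"
      using continuous_on_product_coordinates[of x] by (metis continuous_on_eq_continuous_at open_UNIV UNIV_I)
    from isCont_tendsto_compose[OF this \<open>(f \<circ> r) \<longlonglongrightarrow> l\<close>] show ?thesis by (simp add: o_def)
  qed
  ultimately show ?thesis by blast
qed

primrec Bseq :: "(real \<Rightarrow> real) \<Rightarrow> nat \<Rightarrow> real" where
  "Bseq R 0 = 1"
| "Bseq R (Suc n) = max (Bseq R n + 1) (R (Bseq R n))"

lemma Bseq_ge1: "1 \<le> Bseq R n"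
  by (induction n) auto

lemma Bseq_mono: "m \<le> n \<Longrightarrow> Bseq R m \<le> Bseq R n"
  by (induction n rule: dec_induct) (auto intro: order_trans)

lemma Bseq_strict: "m < n \<Longrightarrow> Bseq R m + 1 \<le> Bseq R n"
proof -
  assume "m < n"
  then obtain k where "n = Suc (m + k)" by (metis less_iff_Suc_add)
  then show ?thesis using Bseq_mono[of m "m + k" R] by auto
qed



theorem theorem3p21:
  fixes Iset :: "'i::countable \<Rightarrow> 'i set"
    and gam :: "'i \<Rightarrow> 'i \<Rightarrow> real \<Rightarrow> real"
    and mu :: "'i \<Rightarrow> ('i \<Rightarrow> real) \<Rightarrow> ennreal"
    and A :: "('i \<Rightarrow> real) set"
  assumes gain: "gain_operator Iset gam mu"
    and A_sub: "A \<subseteq> Psi (Gam Iset gam mu)"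
    and A_closed: "weak_star_closed A"
    and A_inv: "\<forall>s\<in>A. Gam Iset gam mu s \<in> A"
    and A_cofinal: "cofinal A"
    and A_coercive: "coercive A"
    and gatt: "GATT (Gam Iset gam mu)"
    and asmA: "assumption_A Iset gam"
    and out_nb: "\<forall>i. \<exists>j. i \<in> Iset j"
  shows "\<exists>s0 \<in> interior_cone \<inter> Psi (Gam Iset gam mu).
           \<exists>s :: int \<Rightarrow> ('i \<Rightarrow> real). s 0 = s0 \<and>
             (\<forall>n. s (n + 1) = Gam Iset gam mu (s n)) \<and>
             (\<exists>\<sigma>. interpolates s \<sigma> \<and> path_of_decay (Gam Iset gam mu) \<sigma>)"
proof -
  define T where "T = Gam Iset gam mu"
  obtain \<xi> where xi: "Kinf \<xi>" "\<And>i s. s \<in> linf_plus \<Longrightarrow> ennreal (\<xi> (supnorm s)) \<le> mu i s"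
    using gain_M1[OF gain] by metis
  obtain \<eta> where eta: "Kinf \<eta>" "\<And>i j r. j \<in> Iset i \<Longrightarrow> 0 \<le> r \<Longrightarrow> \<eta> r \<le> gam i j r"
    using asmA unfolding assumption_A_def by blast
  have ne: "Iset i \<noteq> {}" for i using asmA unfolding assumption_A_def by blast
  obtain \<phi> where phi: "Kinf \<phi>" "\<And>s i. s \<in> A \<Longrightarrow> \<phi> (supnorm s) \<le> s i"
    using A_coercive unfolding coercive_def by blast
  define \<rho> where "\<rho> = (\<lambda>r. \<xi> (\<eta> (\<phi> r)))"
  have rho: "Kinf \<rho>" unfolding \<rho>_def using Kinf_comp[OF xi(1) Kinf_comp[OF eta(1) phi(1)]] by simp
  have Tnn: "0 \<le> T s i" for s i unfolding T_def by (rule Gam_nonneg)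
  have Tlow: "\<xi> (\<eta> (s j)) \<le> T s i" if s: "\<And>k. 0 \<le> s k" and j: "j \<in> Iset i" for s i j
  proof -
    have "\<eta> (s j) \<le> gam i j (s j)" using eta(2)[OF j s] .
    then have "\<xi> (\<eta> (s j)) \<le> \<xi> (gam i j (s j))" by (rule Kinf_mono[OF xi(1) Kinf_nonneg[OF eta(1) s]])
    also have "\<dots> \<le> T s i" unfolding T_def by (rule Gam_lower[where s=s, OF gain s j xi])
    finally show ?thesis .
  qed
  have A_lp: "s \<in> linf_plus" if "s \<in> A" for s using that A_sub unfolding Psi_def by auto
  have A_psi: "T s i \<le> s i" if "s \<in> A" for s i using that A_sub unfolding Psi_def T_def by auto
  have A_T: "T s \<in> A" if "s \<in> A" for s using that A_inv unfolding T_def by auto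
  have A_rho: "\<rho> (supnorm s) \<le> T s i" if s: "s \<in> A" for s i
  proof -
    obtain j where j: "j \<in> Iset i" using ne[of i] by blast
    have s0: "\<And>k. 0 \<le> s k" using linf_plus_nonneg[OF A_lp[OF s]] .
    have p0: "0 \<le> \<phi> (supnorm s)" by (rule Kinf_nonneg[OF phi(1) supnorm_nonneg_lp[OF A_lp[OF s]]])
    have "\<eta> (\<phi> (supnorm s)) \<le> \<eta> (s j)" by (rule Kinf_mono[OF eta(1) p0 phi(2)[OF s]])
    then have "\<rho> (supnorm s) \<le> \<xi> (\<eta> (s j))" unfolding \<rho>_def
      by (rule Kinf_mono[OF xi(1) Kinf_nonneg[OF eta(1) p0]])
    also have "\<dots> \<le> T s i" by (rule Tlow[OF s0 j])
    finally show ?thesis .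
  qed
  have A_rho': "\<rho> (supnorm s) \<le> supnorm (T s)" if s: "s \<in> A" for s
    using A_rho[OF s, of undefined] linf_plus_ge[OF A_lp[OF A_T[OF s]], of undefined] by linarith
  have "\<forall>c. \<exists>R. \<forall>r\<ge>0. \<rho> r \<le> c \<longrightarrow> r \<le> R"
  proof
    fix c
    obtain r0 where r0: "r0 \<ge> 0" "c < \<rho> r0" using Kinf_unb[OF rho] by blast
    show "\<exists>R. \<forall>r\<ge>0. \<rho> r \<le> c \<longrightarrow> r \<le> R"
    proof (intro exI[of _ r0] allI impI)
      fix r assume "0 \<le> r" "\<rho> r \<le> c"
      show "r \<le> r0"
      proof (rule ccontr)
        assume "\<not> r \<le> r0"
        then have "\<rho> r0 < \<rho> r" using Kinf_strict[OF rho r0(1)] by simp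
        then show False using r0 \<open>\<rho> r \<le> c\<close> by simp
      qed
    qed
  qed
  then obtain Rf where Rf: "\<And>c r. 0 \<le> r \<Longrightarrow> \<rho> r \<le> c \<Longrightarrow> r \<le> Rf c" by metis
  define B where "B = Bseq Rf"
  have bkw: "supnorm s \<le> B (Suc n)" if s: "s \<in> A" and hle: "supnorm (T s) \<le> B n" for s n
  proof -
    have "supnorm s \<le> Rf (B n)"
      by (rule Rf[OF supnorm_nonneg_lp[OF A_lp[OF s]]]) (use A_rho'[OF s] hle in linarith)
    then show ?thesis unfolding B_def by simp
  qed
  have "\<forall>k. \<exists>x. x \<in> A \<and> (\<forall>i. B k + 1 \<le> x i)"
  proof
    fix k
    have "(\<lambda>_. B k + 1) \<in> linf_plus"
      by (rule linf_plusI[of _ "B k + 1"]) (use Bseq_ge1[of Rf k] in \<open>auto simp: B_def\<close>)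
    from bspec[OF A_cofinal[unfolded cofinal_def] this]
    show "\<exists>x. x \<in> A \<and> (\<forall>i. B k + 1 \<le> x i)" by auto
  qed
  then obtain a where a: "\<And>k. a k \<in> A" "\<And>k i. B k + 1 \<le> a k i" by metis
  define orb where "orb k m = (T ^^ m) (a k)" for k m
  have orb_A: "orb k m \<in> A" for k m
    by (induction m) (auto simp: orb_def a A_T)
  have orb_Suc: "orb k (Suc m) = T (orb k m)" for k m by (simp add: orb_def)
  have orb_anti: "orb k m' i \<le> orb k m i" if "m \<le> m'" for k m m' i
    using lift_Suc_antimono_le[of "\<lambda>m. orb k m i", OF _ that] orb_Suc A_psi orb_A by metis
  have orb_lim: "(\<lambda>m. supnorm (orb k m)) \<longlonglongrightarrow> 0" for k
    using gatt A_lp[OF a(1)] unfolding GATT_def orb_def T_def by blast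
  have ex1: "\<exists>m. supnorm (orb k m) \<le> 1" for k
  proof -
    have "eventually (\<lambda>m. supnorm (orb k m) < 1) sequentially"
      using order_tendstoD(2)[OF orb_lim[of k]] by simp
    then obtain N where "\<forall>m\<ge>N. supnorm (orb k m) < 1" unfolding eventually_sequentially by blast
    then show ?thesis using less_imp_le by blast
  qed
  define mk where "mk k = (LEAST m. supnorm (orb k m) \<le> 1)" for k
  have mk1: "supnorm (orb k (mk k)) \<le> 1" for k unfolding mk_def by (rule LeastI_ex[OF ex1])
  have mk2: "1 < supnorm (orb k m)" if "m < mk k" for k m
    using not_less_Least[OF that[unfolded mk_def]] by simp
  have mk_back: "supnorm (orb k (mk k - n)) \<le> B n" if "n \<le> mk k" for k n
    using that
  proof (induction n)
    case 0 then show ?case using mk1[of k] by (simp add: B_def)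
  next
    case (Suc n)
    have e: "mk k - n = Suc (mk k - Suc n)" using Suc.prems by simp
    have "supnorm (T (orb k (mk k - Suc n))) \<le> B n"
      using Suc.IH Suc.prems unfolding e orb_Suc by simp
    then show ?case by (rule bkw[OF orb_A])
  qed
  have mk_big: "k < mk k" for k
  proof (rule ccontr)
    assume "\<not> k < mk k"
    then have "mk k \<le> k" by simp
    have "supnorm (a k) \<le> B (mk k)" using mk_back[of "mk k" k] by (simp add: orb_def)
    also have "\<dots> \<le> B k" unfolding B_def by (rule Bseq_mono[OF \<open>mk k \<le> k\<close>])
    finally have "supnorm (a k) \<le> B k" .
    moreover have "B k + 1 \<le> supnorm (a k)" using a(2)[of k undefined] linf_plus_ge[OF A_lp[OF a(1)], of k undefined] by linarith
    ultimately show False by simp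
  qed
  define t where "t k n = (if - int (mk k) \<le> n then orb k (nat (int (mk k) + n)) else (\<lambda>_. 0))" for k and n :: int
  have t_in: "t k n = orb k (nat (int (mk k) + n))" if "- int (mk k) \<le> n" for k n
    using that unfolding t_def by simp
  have tA: "t k n \<in> A" if "- int (mk k) \<le> n" for k n
    unfolding t_in[OF that] by (rule orb_A)
  have tstep: "t k (n + 1) = T (t k n)" if "- int (mk k) \<le> n" for k n
  proof -
    have "nat (int (mk k) + (n + 1)) = Suc (nat (int (mk k) + n))" using that by simp
    then show ?thesis using t_in[OF that] t_in[of k "n+1"] that orb_Suc by simp
  qed
  have t_bd: "0 \<le> t k n i \<and> t k n i \<le> B (nat (- n))" for k n i
  proof (cases "- int (mk k) \<le> n")
    case False then show ?thesis using Bseq_ge1[of Rf "nat (- n)"] by (simp add: t_def B_def)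
  next
    case True
    have nn: "0 \<le> t k n i" using linf_plus_nonneg[OF A_lp[OF tA[OF True]]] .
    show ?thesis
    proof (cases "0 \<le> n")
      case True
      have "t k n i \<le> orb k (mk k) i" unfolding t_in[OF \<open>- int (mk k) \<le> n\<close>]
        by (rule orb_anti) (use True in simp)
      also have "\<dots> \<le> 1" using linf_plus_ge[OF A_lp[OF orb_A]] mk1 order_trans by metis
      finally show ?thesis using nn True by (simp add: B_def)
    next
      case False
      have e: "nat (int (mk k) + n) = mk k - nat (- n)" using False \<open>- int (mk k) \<le> n\<close> by simp
      have "t k n i \<le> supnorm (t k n)" by (rule linf_plus_ge[OF A_lp[OF tA[OF \<open>- int (mk k) \<le> n\<close>]]])
      also have "\<dots> \<le> B (nat (- n))" unfolding t_in[OF \<open>- int (mk k) \<le> n\<close>] e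
        by (rule mk_back) (use False \<open>- int (mk k) \<le> n\<close> in simp)
      finally show ?thesis using nn by simp
    qed
  qed
  have "\<exists>l r. strict_mono r \<and> (\<forall>x. (\<lambda>k. (\<lambda>k (n, i). t k n i) (r k) x) \<longlonglongrightarrow> l x)"
    by (rule seq_box[of _ "\<lambda>(n, i). B (nat (- n))"]) (use t_bd in auto)
  then obtain l r where r: "strict_mono r" and lconv: "\<And>x. (\<lambda>k. (\<lambda>k (n, i). t k n i) (r k) x) \<longlonglongrightarrow> l x"
    by blast
  define s where "s n i = l (n, i)" for n i
  have conv: "(\<lambda>k. t (r k) n i) \<longlonglongrightarrow> s n i" for n i
    using lconv[of "(n, i)"] unfolding s_def by simp
  have ev: "eventually (\<lambda>k. - int (mk (r k)) \<le> n) sequentially" for n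
  proof (rule eventually_sequentiallyI[of "nat (- n)"])
    fix k assume "nat (- n) \<le> k"
    moreover have "k \<le> r k" by (rule seq_suble[OF r])
    moreover have "r k < mk (r k)" by (rule mk_big)
    ultimately show "- int (mk (r k)) \<le> n" by linarith
  qed
  have s_bd: "0 \<le> s n i \<and> s n i \<le> B (nat (- n))" for n i
    using LIMSEQ_le_const[OF conv[of n i]] LIMSEQ_le_const2[OF conv[of n i]] t_bd by meson
  have s_lp: "s n \<in> linf_plus" for n
    by (rule linf_plusI[of _ "B (nat (- n))"]) (use s_bd in auto)
  have s_nn: "\<And>j. 0 \<le> s n j" for n using s_bd by blast
  have s_step: "s (n + 1) = T (s n)" for n
  proof
    fix i
    have t_nn: "\<And>k j. 0 \<le> t (r k) n j" using t_bd by blast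
    have c1: "(\<lambda>k. T (t (r k) n) i) \<longlonglongrightarrow> T (s n) i"
      unfolding T_def by (rule Gam_cont[OF gain t_nn conv])
    have "eventually (\<lambda>k. T (t (r k) n) i = t (r k) (n + 1) i) sequentially"
      using ev[of n] by (rule eventually_mono) (simp add: tstep)
    from tendsto_cong[OF this, THEN iffD1, OF c1]
    have "(\<lambda>k. t (r k) (n + 1) i) \<longlonglongrightarrow> T (s n) i" .
    from LIMSEQ_unique[OF conv[of "n + 1" i] this]
    show "s (n + 1) i = T (s n) i" .
  qed
  have s_anti: "s (n + 1) i \<le> s n i" for n i
  proof (rule tendsto_le[OF trivial_limit_sequentially conv conv])
    show "eventually (\<lambda>k. t (r k) (n + 1) i \<le> t (r k) n i) sequentially"
      using ev[of n] by (rule eventually_mono) (simp add: tstep A_psi tA)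
  qed
  have s_anti': "\<forall>n. (\<lambda>n. s n i) (n + 1) \<le> (\<lambda>n. s n i) n" for i using s_anti by simp
  have s0_low: "\<rho> 1 \<le> s 0 i" for i
  proof (rule LIMSEQ_le_const[OF conv], intro exI allI impI)
    fix k :: nat
    have mp: "0 < mk (r k)" using mk_big[of "r k"] by simp
    have e: "orb (r k) (mk (r k)) = T (orb (r k) (mk (r k) - 1))"
      using orb_Suc[of "r k" "mk (r k) - 1"] mp by simp
    have "1 < supnorm (orb (r k) (mk (r k) - 1))" by (rule mk2) (use mp in simp)
    then have "\<rho> 1 \<le> \<rho> (supnorm (orb (r k) (mk (r k) - 1)))" by (intro Kinf_mono[OF rho]) auto
    also have "\<dots> \<le> t (r k) 0 i" using t_in[of "r k" 0] e A_rho[OF orb_A] by simp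
    finally show "\<rho> 1 \<le> t (r k) 0 i" .
  qed
  have rho1: "0 < \<rho> 1" by (rule Kinf_pos[OF rho]) simp
  have s_anti2: "s n i \<le> s m i" if "m \<le> n" for m n i
    using anti_int[OF s_anti'[of i] that] by simp
  have s_ge0: "s 0 i \<le> s n i" if "n \<le> 0" for n i using s_anti2[OF that] .
  have phi_j: "\<phi> (s n j) \<le> s n i" for n i j
  proof (rule tendsto_le[OF trivial_limit_sequentially conv])
    show "(\<lambda>k. \<phi> (t (r k) n j)) \<longlonglongrightarrow> \<phi> (s n j)"
      by (rule continuous_on_tendsto_compose[OF Kinf_cont[OF phi(1)] conv])
         (use s_bd t_bd in \<open>auto intro: always_eventually\<close>)
    show "eventually (\<lambda>k. \<phi> (t (r k) n j) \<le> t (r k) n i) sequentially"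
      using ev[of n]
    proof (rule eventually_mono)
      fix k assume h: "- int (mk (r k)) \<le> n"
      have "\<phi> (t (r k) n j) \<le> \<phi> (supnorm (t (r k) n))"
        by (rule Kinf_mono[OF phi(1)]) (use t_bd linf_plus_ge[OF A_lp[OF tA[OF h]]] in auto)
      also have "\<dots> \<le> t (r k) n i" by (rule phi(2)[OF tA[OF h]])
      finally show "\<phi> (t (r k) n j) \<le> t (r k) n i" .
    qed
  qed
  have s_coer: "\<phi> (supnorm (s n)) \<le> s n i" for n i
  proof (rule ccontr)
    define S where "S = supnorm (s n)"
    assume "\<not> \<phi> (supnorm (s n)) \<le> s n i"
    then have gt: "s n i < \<phi> S" unfolding S_def by simp
    have S0: "0 \<le> S" unfolding S_def by (rule supnorm_nonneg_lp[OF s_lp])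
    have "\<forall>e>0. \<exists>d>0. \<forall>y\<in>{0..}. dist y S < d \<longrightarrow> dist (\<phi> y) (\<phi> S) < e"
      using bspec[OF Kinf_cont[OF phi(1), unfolded continuous_on_iff], of S] S0 by simp
    from this[rule_format, of "\<phi> S - s n i"] gt
    obtain d where d: "d > 0" "\<And>y. y \<in> {0..} \<Longrightarrow> dist y S < d \<Longrightarrow> dist (\<phi> y) (\<phi> S) < \<phi> S - s n i"
      by auto
    have "S - d < (SUP j. \<bar>s n j\<bar>)" using d(1) unfolding S_def supnorm_def by simp
    then obtain j where j: "S - d < \<bar>s n j\<bar>"
      using less_cSUP_iff[of UNIV "\<lambda>j. \<bar>s n j\<bar>"] linf_plus_bdd[OF s_lp[of n]] by auto
    have j': "S - d < s n j" using j s_nn[of n j] by simp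
    have "s n j \<le> S" unfolding S_def by (rule linf_plus_ge[OF s_lp])
    then have "dist (s n j) S < d" using j' by (simp add: dist_real_def)
    from d(2)[OF _ this] s_nn[of n j] have "dist (\<phi> (s n j)) (\<phi> S) < \<phi> S - s n i" by simp
    then have "s n i < \<phi> (s n j)" by (simp add: dist_real_def)
    then show False using phi_j[of n j i] by simp
  qed
  define cmin where "cmin n = (INF i. s n i)" for n
  have bddb: "bdd_below (range (s n))" for n using s_nn by (auto intro!: bdd_belowI[of _ 0])
  have cmin_le: "cmin n \<le> s n i" for n i unfolding cmin_def by (rule cINF_lower[OF bddb]) simp
  have cmin_ge: "c \<le> cmin n" if "\<And>i. c \<le> s n i" for c n unfolding cmin_def by (rule cINF_greatest) (use that in auto)
  have cmin_phi: "\<phi> (supnorm (s n)) \<le> cmin n" for n by (rule cmin_ge) (rule s_coer)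
  have cmin_anti: "cmin (n + 1) \<le> cmin n" for n
    by (rule cmin_ge) (use cmin_le s_anti order_trans in blast)
  have cmin_anti': "\<forall>n. cmin (n + 1) \<le> cmin n" using cmin_anti by blast
  have cmin_pos_nat: "0 < cmin (int m)" for m
  proof (induction m)
    case 0
    have "\<rho> 1 \<le> cmin (int 0)" by (rule cmin_ge) (use s0_low in simp)
    then show ?case using rho1 by linarith
  next
    case (Suc m)
    have "\<xi> (\<eta> (cmin (int m))) \<le> cmin (int (Suc m))"
    proof (rule cmin_ge)
      fix i
      obtain j where j: "j \<in> Iset i" using ne[of i] by blast
      have c0: "0 \<le> cmin (int m)" using Suc.IH by simp
      have "\<eta> (cmin (int m)) \<le> \<eta> (s (int m) j)" by (rule Kinf_mono[OF eta(1) c0 cmin_le])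
      then have "\<xi> (\<eta> (cmin (int m))) \<le> \<xi> (\<eta> (s (int m) j))"
        by (rule Kinf_mono[OF xi(1) Kinf_nonneg[OF eta(1) c0]])
      also have "\<dots> \<le> T (s (int m)) i" by (rule Tlow[OF s_nn j])
      also have "\<dots> = s (int (Suc m)) i" using s_step[of "int m"] by (simp add: add.commute)
      finally show "\<xi> (\<eta> (cmin (int m))) \<le> s (int (Suc m)) i" .
    qed
    moreover have "0 < \<xi> (\<eta> (cmin (int m)))" using Kinf_pos[OF xi(1) Kinf_pos[OF eta(1) Suc.IH]] .
    ultimately show ?case by linarith
  qed
  have cmin_pos: "0 < cmin n" for n
  proof (cases "n \<le> 0")
    case True
    have "\<rho> 1 \<le> cmin n" by (rule cmin_ge) (use s0_low s_ge0[OF True] order_trans in blast)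
    then show ?thesis using rho1 by linarith
  next
    case False
    then have "n = int (nat n)" by simp
    then show ?thesis using cmin_pos_nat[of "nat n"] by simp
  qed
  define Cmax where "Cmax n = supnorm (s n)" for n
  have Cmax_ge: "s n i \<le> Cmax n" for n i unfolding Cmax_def by (rule linf_plus_ge[OF s_lp])
  have Cmax_anti: "Cmax (n + 1) \<le> Cmax n" for n
    unfolding Cmax_def by (rule supnorm_mono_lp[OF s_lp s_lp s_anti])
  have Cmax_anti': "\<forall>n. Cmax (n + 1) \<le> Cmax n" using Cmax_anti by blast
  have Cmax_pos: "0 < Cmax n" for n using cmin_le[of n undefined] Cmax_ge[of n undefined] cmin_pos[of n] by linarith
  have s_pow: "s (int m) = (T ^^ m) (s 0)" for m
  proof (induction m)
    case (Suc m)
    have "s (int (Suc m)) = T (s (int m))" using s_step[of "int m"] by (simp add: add.commute)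
    then show ?case using Suc.IH by simp
  qed simp
  have Cmax_small: "\<exists>n. Cmax n < e" if e: "0 < e" for e
  proof -
    have "(\<lambda>m. supnorm ((T ^^ m) (s 0))) \<longlonglongrightarrow> 0"
      using gatt s_lp[of 0] unfolding GATT_def T_def by blast
    from order_tendstoD(2)[OF this e] obtain N where "\<forall>m\<ge>N. supnorm ((T ^^ m) (s 0)) < e"
      unfolding eventually_sequentially by blast
    then have "Cmax (int N) < e" unfolding Cmax_def s_pow by blast
    then show ?thesis by blast
  qed
  have big_sup: "\<exists>n. M < Cmax n" for M
  proof (rule ccontr)
    assume "\<not> (\<exists>n. M < Cmax n)"
    then have bd: "Cmax n \<le> M" for n by (simp add: not_less)
    define X where "X i k = s (- int k) i" for i k
    have Xinc: "incseq (X i)" for i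
      unfolding incseq_Suc_iff X_def by (intro allI s_anti2) simp
    have Xbd: "X i k \<le> M" for i k using Cmax_ge[of "- int k" i] bd[of "- int k"] unfolding X_def by linarith
    define ss where "ss i = (SUP k. X i k)" for i
    have Xconv: "X i \<longlonglongrightarrow> ss i" for i
      unfolding ss_def by (rule LIMSEQ_incseq_SUP[OF _ Xinc]) (use Xbd in \<open>auto intro!: bdd_aboveI[of _ M]\<close>)
    have ss_ge: "X i k \<le> ss i" for i k by (rule incseq_le[OF Xinc Xconv])
    have ss_le: "ss i \<le> M" for i by (rule LIMSEQ_le_const2[OF Xconv]) (use Xbd in auto)
    have ss_nn: "0 \<le> ss i" for i using ss_ge[of i 0] s_nn[of 0 i] by (simp add: X_def)
    have ss_lp: "ss \<in> linf_plus" by (rule linf_plusI[of _ M]) (use ss_nn ss_le in auto)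
    have fixp: "T ss = ss"
    proof
      fix i
      have c: "(\<lambda>k. T (\<lambda>j. X j (Suc k)) i) \<longlonglongrightarrow> T ss i"
        unfolding T_def
        by (rule Gam_cont[where x="\<lambda>k j. X j (Suc k)" and y=ss, OF gain])
           (use s_nn LIMSEQ_Suc[OF Xconv] in \<open>auto simp: X_def\<close>)
      have e: "T (\<lambda>j. X j (Suc k)) = (\<lambda>j. X j k)" for k
      proof -
        have "(\<lambda>j. X j (Suc k)) = s (- int (Suc k))" by (simp add: X_def)
        moreover have "T (s (- int (Suc k))) = s (- int (Suc k) + 1)" by (rule s_step[symmetric])
        moreover have "- int (Suc k) + 1 = - int k" by simp
        ultimately show ?thesis by (simp add: X_def)
      qed
      from c have "X i \<longlonglongrightarrow> T ss i" unfolding e .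
      from LIMSEQ_unique[OF this Xconv[of i]] show "T ss i = ss i" .
    qed
    have "(T ^^ m) ss = ss" for m by (induction m) (simp_all add: fixp)
    moreover have "(\<lambda>m. supnorm ((T ^^ m) ss)) \<longlonglongrightarrow> 0"
      using gatt ss_lp unfolding GATT_def T_def by blast
    ultimately have "supnorm ss = 0" by (simp add: LIMSEQ_const_iff)
    moreover have "ss undefined \<le> supnorm ss" by (rule linf_plus_ge[OF ss_lp])
    moreover have "\<rho> 1 \<le> ss undefined" using ss_ge[of undefined 0] s0_low[of undefined] by (simp add: X_def)
    ultimately show False using rho1 by linarith
  qed
  have cmin_big: "\<exists>n. M < cmin n" for M
  proof -
    obtain r0 where r0: "0 \<le> r0" "M < \<phi> r0" using Kinf_unb[OF phi(1)] by blast
    obtain n where n: "r0 < Cmax n" using big_sup by blast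
    have "\<phi> r0 \<le> \<phi> (Cmax n)" by (rule Kinf_mono[OF phi(1) r0(1)]) (use n in simp)
    then have "M < cmin n" using r0 cmin_phi[of n] unfolding Cmax_def by linarith
    then show ?thesis by blast
  qed
  define h where "h n = P n / (1 + P n)" for n
  have h_pos: "0 < h n" for n unfolding h_def using P_pos[of n] by simp
  have h_lt1: "h n < 1" for n unfolding h_def using P_pos[of n] by simp
  have h_strict: "h (n + 1) < h n" for n
  proof -
    have a: "P (n + 1) < P n" by (rule P_strict) simp
    show ?thesis unfolding h_def using a P_pos[of n] P_pos[of "n+1"] by (simp add: field_simps)
  qed
  have h_half: "1 / 2 \<le> h n" if "n \<le> 0" for n
  proof -
    have "P 0 \<le> P n" by (rule P_mono[OF that])
    then have "1 \<le> P n" by (simp add: P_def)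
    then show ?thesis unfolding h_def using P_pos[of n] by (simp add: field_simps)
  qed
  define bmin where "bmin n = cmin (n + 1) * h n" for n
  define bmax where "bmax n = Cmax (n - 1) * (1 + P n)" for n
  have bmin_s: "\<forall>n. bmin (n + 1) < bmin n"
  proof
    fix n
    have "cmin (n + 1 + 1) * h (n + 1) \<le> cmin (n + 1) * h (n + 1)"
      by (rule mult_right_mono[OF cmin_anti]) (use h_pos less_imp_le in blast)
    also have "\<dots> < cmin (n + 1) * h n" by (rule mult_strict_left_mono[OF h_strict cmin_pos])
    finally show "bmin (n + 1) < bmin n" unfolding bmin_def .
  qed
  have bmin_pos: "\<forall>n. 0 < bmin n" unfolding bmin_def using cmin_pos h_pos by simp
  have bmin_le: "bmin n \<le> cmin (n + 1)" for n
    unfolding bmin_def using cmin_pos[of "n+1"] h_lt1[of n] by (simp add: mult_le_cancel_left1)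
  have bmin_small: "\<forall>e>0. \<exists>n. bmin n < e"
  proof (intro allI impI)
    fix e :: real assume "0 < e"
    then obtain N where N: "Cmax N < e" using Cmax_small by blast
    have "bmin (N - 1) \<le> cmin N" using bmin_le[of "N - 1"] by simp
    also have "\<dots> \<le> Cmax N" using cmin_le[of N undefined] Cmax_ge[of N undefined] by linarith
    finally show "\<exists>n. bmin n < e" using N by (intro exI[of _ "N - 1"]) linarith
  qed
  have bmin_big: "\<forall>M. \<exists>n. M < bmin n"
  proof
    fix M
    obtain n0 where n0: "2 * \<bar>M\<bar> < cmin n0" using cmin_big by blast
    define m where "m = min n0 1 - 1"
    have m0: "m \<le> 0" and m1: "m + 1 \<le> n0" unfolding m_def by auto
    have "cmin n0 \<le> cmin (m + 1)" by (rule anti_int[OF cmin_anti' m1])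
    moreover have "1 / 2 \<le> h m" by (rule h_half[OF m0])
    moreover have "0 < cmin (m + 1)" by (rule cmin_pos)
    ultimately have "cmin (m + 1) * (1 / 2) \<le> cmin (m + 1) * h m"
      by (intro mult_left_mono) auto
    then have "cmin n0 / 2 \<le> bmin m" unfolding bmin_def using \<open>cmin n0 \<le> cmin (m + 1)\<close> by linarith
    then show "\<exists>n. M < bmin n" using n0 by (intro exI[of _ m]) linarith
  qed
  have bmax_s: "\<forall>n. bmax (n + 1) < bmax n"
  proof
    fix n
    have P1: "P (n + 1) < P n" by (rule P_strict) simp
    have "Cmax n * (1 + P (n + 1)) \<le> Cmax (n - 1) * (1 + P (n + 1))"
      using Cmax_anti[of "n - 1"] P_pos[of "n+1"] by (intro mult_right_mono) simp_all
    also have "\<dots> < Cmax (n - 1) * (1 + P n)"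
      using P1 Cmax_pos[of "n - 1"] by (intro mult_strict_left_mono) simp_all
    finally show "bmax (n + 1) < bmax n" unfolding bmax_def by simp
  qed
  have bmax_pos: "\<forall>n. 0 < bmax n" unfolding bmax_def using Cmax_pos P_pos by (simp add: add_pos_pos)
  have bmax_ge: "Cmax n \<le> bmax (n + 1)" for n
    unfolding bmax_def using Cmax_pos[of n] P_pos[of "n+1"] by simp
  have bmax_small: "\<forall>e>0. \<exists>n. bmax n < e"
  proof (intro allI impI)
    fix e :: real assume "0 < e"
    then obtain N where N: "Cmax N < e / 2" using Cmax_small[of "e / 2"] by auto
    define N' where "N' = max N 0"
    have "Cmax N' \<le> Cmax N" unfolding N'_def by (rule anti_int[OF Cmax_anti']) simp
    moreover have "P (N' + 1) \<le> 1" using P_mono[of 0 "N' + 1"] unfolding N'_def by (simp add: P_def)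
    have e: "bmax (N' + 1) = Cmax N' * (1 + P (N' + 1))" by (simp add: bmax_def)
    have "Cmax N' * (1 + P (N' + 1)) \<le> Cmax N' * 2"
      by (rule mult_left_mono) (use \<open>P (N' + 1) \<le> 1\<close> Cmax_pos[of N'] in auto)
    then have "bmax (N' + 1) \<le> Cmax N' * 2" unfolding e .
    then show "\<exists>n. bmax n < e" using N \<open>Cmax N' \<le> Cmax N\<close> by (intro exI[of _ "N' + 1"]) linarith
  qed
  have bmax_big: "\<forall>M. \<exists>n. M < bmax n"
  proof
    fix M
    obtain n0 where n0: "M < cmin n0" using cmin_big by blast
    have "cmin n0 \<le> Cmax n0" using cmin_le[of n0 undefined] Cmax_ge[of n0 undefined] by linarith
    then show "\<exists>n. M < bmax n" using n0 bmax_ge[of n0] by (intro exI[of _ "n0 + 1"]) linarith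
  qed
  have Kmin: "Kinf (L bmin)" by (rule Kinf_L[OF bmin_s bmin_pos bmin_small bmin_big])
  have Kmax: "Kinf (L bmax)" by (rule Kinf_L[OF bmax_s bmax_pos bmax_small bmax_big])
  have bmin_anti: "\<forall>n. bmin (n + 1) \<le> bmin n" using bmin_s less_imp_le by blast
  have bmax_anti: "\<forall>n. bmax (n + 1) \<le> bmax n" using bmax_s less_imp_le by blast
  define \<sigma> where "\<sigma> r = (\<lambda>i. L (\<lambda>n. s n i) r)" for r
  have s_ann: "\<forall>n. 0 \<le> (\<lambda>n. s n i) n" for i using s_nn by simp
  have sig_bd: "s (idx r + 1) i \<le> \<sigma> r i \<and> \<sigma> r i \<le> s (idx r) i" if "0 < r" for r i
    using L_bounds[OF s_anti'[of i] idx_bounds[OF that]] unfolding \<sigma>_def by simp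
  have H1: "s 0 \<in> interior_cone \<inter> Psi T"
  proof
    show "s 0 \<in> interior_cone" unfolding interior_cone_def using s_lp[of 0] s0_low rho1 by blast
    show "s 0 \<in> Psi T" unfolding Psi_def using s_lp[of 0] s_anti[of 0] s_step[of 0] by simp
  qed
  have H2: "\<forall>n. s (n + 1) = T (s n)" using s_step by blast
  have H3: "interpolates s \<sigma>" unfolding interpolates_def
  proof (intro conjI allI ballI)
    show "\<sigma> 0 = (\<lambda>_. 0)" by (simp add: \<sigma>_def L_zero)
    fix n :: int and \<theta> :: real assume \<theta>: "\<theta> \<in> {0..1}"
    show "\<sigma> ((1 - \<theta>) * 2 powr (- real_of_int (n + 1)) + \<theta> * 2 powr (- real_of_int n)) = (\<lambda>i. (1 - \<theta>) * s (n + 1) i + \<theta> * s n i)"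
      using L_interp[of \<theta> _ n] \<theta> unfolding \<sigma>_def P_def by auto
  qed
  have H4a: "\<forall>r\<ge>0. \<sigma> r \<in> Psi T"
  proof (intro allI impI)
    fix r :: real assume r: "0 \<le> r"
    show "\<sigma> r \<in> Psi T"
    proof (cases "r = 0")
      case True
      have "\<sigma> r = (\<lambda>_. 0)" using True by (simp add: \<sigma>_def L_zero)
      moreover have "(\<lambda>_. 0) \<in> linf_plus" by (rule linf_plusI[of _ 0]) auto
      ultimately show ?thesis unfolding Psi_def T_def using Gam_zero[OF gain] by simp
    next
      case False
      then have r0: "0 < r" using r by simp
      define n where "n = idx r"
      have sb: "s (n + 1) i \<le> \<sigma> r i \<and> \<sigma> r i \<le> s n i" for i using sig_bd[OF r0] unfolding n_def by blast
      have nn: "0 \<le> \<sigma> r i" for i using sb[of i] s_nn[of "n+1" i] by linarith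
      have lp: "\<sigma> r \<in> linf_plus" by (rule linf_plusI[of _ "Cmax n"]) (use nn sb Cmax_ge order_trans in blast)+
      have "T (\<sigma> r) i \<le> \<sigma> r i" for i
      proof -
        have "T (\<sigma> r) i \<le> T (s n) i" unfolding T_def
          by (rule Gam_mono[where s="\<sigma> r" and t="s n", OF gain nn]) (use sb in blast)
        also have "\<dots> = s (n + 1) i" using s_step[of n] by simp
        also have "\<dots> \<le> \<sigma> r i" using sb by blast
        finally show ?thesis .
      qed
      then show ?thesis unfolding Psi_def using lp by simp
    qed
  qed
  have H4b: "\<forall>r\<ge>0. \<forall>i. L bmin r \<le> \<sigma> r i \<and> \<sigma> r i \<le> L bmax r"
  proof (intro allI impI)
    fix r :: real and i assume r: "0 \<le> r"
    show "L bmin r \<le> \<sigma> r i \<and> \<sigma> r i \<le> L bmax r"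
    proof (cases "r = 0")
      case True then show ?thesis by (simp add: \<sigma>_def L_zero)
    next
      case False
      then have r0: "0 < r" using r by simp
      define n where "n = idx r"
      have bn: "P (n + 1) < r" "r \<le> P n" using idx_bounds[OF r0] unfolding n_def by auto
      have sb: "s (n + 1) i \<le> \<sigma> r i \<and> \<sigma> r i \<le> s n i" using sig_bd[OF r0] unfolding n_def by blast
      have "L bmin r \<le> bmin n" by (rule L_bounds(2)[OF bmin_anti bn])
      also have "\<dots> \<le> cmin (n + 1)" by (rule bmin_le)
      also have "\<dots> \<le> \<sigma> r i" using cmin_le[of "n+1" i] sb by linarith
      finally have 1: "L bmin r \<le> \<sigma> r i" .
      have "\<sigma> r i \<le> Cmax n" using sb Cmax_ge[of n i] by linarith
      also have "\<dots> \<le> bmax (n + 1)" by (rule bmax_ge)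
      also have "\<dots> \<le> L bmax r" by (rule L_bounds(1)[OF bmax_anti bn])
      finally show ?thesis using 1 by simp
    qed
  qed
  have H4c: "\<forall>r\<ge>0. \<forall>r'. r \<le> r' \<longrightarrow> (\<forall>i. \<sigma> r i \<le> \<sigma> r' i)"
    unfolding \<sigma>_def using L_mono[OF s_anti' s_ann] by blast
  have H4d: "\<forall>r\<ge>0. \<forall>\<epsilon>>0. \<exists>\<delta>>0. \<forall>r'\<ge>0. \<bar>r' - r\<bar> < \<delta> \<longrightarrow> supnorm (\<lambda>i. \<sigma> r' i - \<sigma> r i) < \<epsilon>"
  proof (intro allI impI)
    fix r \<epsilon> :: real assume r: "0 \<le> r" and e: "0 < \<epsilon>"
    have "\<exists>d>0. \<forall>r'\<ge>0. \<bar>r' - r\<bar> < d \<longrightarrow> (\<forall>j. \<bar>L ((\<lambda>i n. s n i) j) r' - L ((\<lambda>i n. s n i) j) r\<bar> \<le> \<epsilon> / 2)"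
      by (rule L_cont_family[of "\<lambda>i n. s n i" Cmax]) (use s_nn Cmax_ge s_anti Cmax_small r e in auto)
    then obtain d where d: "d > 0" "\<And>r' j. r' \<ge> 0 \<Longrightarrow> \<bar>r' - r\<bar> < d \<Longrightarrow> \<bar>\<sigma> r' j - \<sigma> r j\<bar> \<le> \<epsilon> / 2"
      unfolding \<sigma>_def by auto
    show "\<exists>\<delta>>0. \<forall>r'\<ge>0. \<bar>r' - r\<bar> < \<delta> \<longrightarrow> supnorm (\<lambda>i. \<sigma> r' i - \<sigma> r i) < \<epsilon>"
    proof (intro exI[of _ d] conjI allI impI)
      fix r' :: real assume "0 \<le> r'" "\<bar>r' - r\<bar> < d"
      then have "supnorm (\<lambda>i. \<sigma> r' i - \<sigma> r i) \<le> \<epsilon> / 2" by (intro supnorm_le d(2))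
      then show "supnorm (\<lambda>i. \<sigma> r' i - \<sigma> r i) < \<epsilon>" using e by linarith
    qed (rule d(1))
  qed
  have H4: "path_of_decay T \<sigma>" unfolding path_of_decay_def
    using H4a H4b H4c H4d Kmin Kmax by blast
  show ?thesis unfolding T_def[symmetric] using H1 H2 H3 H4 by blast
qed

end
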